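(* Let $p(\cdot)\in\mathcal{P}^{\log}(\mathbb{R}^n)$ with $0<p_-\le p_+<\infty$ and $p_\infty=p_+$, and let $s>1/p_-$. If $\omega$ is a weight with $\omega^{1/s}\in RH_{sp_+}$, then for every cube $Q$, \[ \|\chi_Q\|_{L^{p(\cdot)}_\omega}\approx\begin{cases}\left[\int_Q\omega(x)^{p_+}dx\right]^{1/p_+}, & \text{if } \ell(Q)>1,\\[1ex] \left[\int_Q\omega(x)^{p_+(Q)}dx\right]^{1/p_+(Q)}, & \text{if } \ell(Q)\le1,\end{cases} \] with implicit constants independent of $Q$.
   Context: $\ell(Q)$ is the side length of $Q$; $p_+(Q)=\operatorname{ess\,sup}_{x\in Q}p(x)$, $p_+=p_+(\mathbb{R}^n)$, $p_-=\operatorname{ess\,inf}p$. $p(\cdot)\in\mathcal{P}^{\log}(\mathbb{R}^n)$ means $0<p_-\le p_+<\infty$ and there are $C,C_\infty>0$ and $p_-\le p_\infty\le p_+$ with $|p(x)-p(y)|\le C/(-\log|x-y|)$ for $|x-y|\le1/2$ and $|p(x)-p_\infty|\le C_\infty/\log(e+|x|)$. A weight is a locally integrable $\omega$ with $0<\omega<\infty$ a.e.; $\|f\|_{L^{p(\cdot)}_\omega}:=\|f\omega\|_{L^{p(\cdot)}}$ with $\|g\|_{L^{p(\cdot)}}=\inf\{\lambda>0:\int|g/\lambda|^{p(x)}dx\le1\}$. $\omega\in RH_t$ ($t>1$) means there is $C>0$ with $\left(\frac1{|Q|}\int_Q\omega^t\right)^{1/t}\le C\frac1{|Q|}\int_Q\omega$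 for every cube $Q$. *)

theory Defs
  imports "HOL-Analysis.Analysis"
begin

definition ess_sup_on :: "('a::euclidean_space) set \<Rightarrow> ('a \<Rightarrow> real) \<Rightarrow> real" where
  "ess_sup_on Q p = Inf {M. AE x in lebesgue. x \<in> Q \<longrightarrow> p x \<le> M}"

definition ess_inf_on :: "('a::euclidean_space) set \<Rightarrow> ('a \<Rightarrow> real) \<Rightarrow> real" where
  "ess_inf_on Q p = Sup {M. AE x in lebesgue. x \<in> Q \<longrightarrow> M \<le> p x}"

definition cube :: "'a::euclidean_space \<Rightarrow> real \<Rightarrow> 'a set" where
  "cube a l = cbox a (a + l *\<^sub>R One)"

definition P_log :: "('a::euclidean_space \<Rightarrow> real) \<Rightarrow> real \<Rightarrow> bool" where
  "P_log p p_inf \<longleftrightarrow>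
     p \<in> borel_measurable lebesgue \<and>
     (\<exists>M. AE x in lebesgue. p x \<le> M) \<and>
     0 < ess_inf_on UNIV p \<and>
     ess_inf_on UNIV p \<le> p_inf \<and> p_inf \<le> ess_sup_on UNIV p \<and>
     (\<exists>C>0. \<forall>x y. 0 < dist x y \<and> dist x y \<le> 1/2 \<longrightarrow>
                   \<bar>p x - p y\<bar> \<le> C / (- ln (dist x y))) \<and>
     (\<exists>Cinf>0. \<forall>x. \<bar>p x - p_inf\<bar> \<le> Cinf / ln (exp 1 + norm x))"

definition var_norm :: "('a::euclidean_space \<Rightarrow> real) \<Rightarrow> ('a \<Rightarrow> real) \<Rightarrow> real" where
  "var_norm p g = Inf {lam. 0 < lam \<and>
      (\<integral>\<^sup>+ x. ennreal ((\<bar>g x\<bar> / lam) powr p x) \<partial>lebesgue) \<le> 1}"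

definition weighted_var_norm ::
  "('a::euclidean_space \<Rightarrow> real) \<Rightarrow> ('a \<Rightarrow> real) \<Rightarrow> ('a \<Rightarrow> real) \<Rightarrow> real" where
  "weighted_var_norm p \<omega> f = var_norm p (\<lambda>x. f x * \<omega> x)"

definition weight :: "('a::euclidean_space \<Rightarrow> real) \<Rightarrow> bool" where
  "weight \<omega> \<longleftrightarrow> (\<forall>K. compact K \<longrightarrow> set_integrable lebesgue K \<omega>) \<and>
                 (AE x in lebesgue. 0 < \<omega> x)"

definition RH :: "real \<Rightarrow> ('a::euclidean_space \<Rightarrow> real) \<Rightarrow> bool" where
  "RH t w \<longleftrightarrow> (\<exists>C>0. \<forall>a l. 0 < l \<longrightarrow>
      set_integrable lebesgue (cube a l) (\<lambda>x. w x powr t) \<and>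
      ((1 / measure lebesgue (cube a l)) * (\<integral>x\<in>cube a l. w x powr t \<partial>lebesgue)) powr (1/t)
        \<le> C * ((1 / measure lebesgue (cube a l)) * (\<integral>x\<in>cube a l. w x \<partial>lebesgue)))"

end

theory Submission
  imports Defs "HOL-Probability.Sinc_Integral"
begin



lemma young_var:
  fixes u r p A :: real
  assumes "0 \<le> u" "0 < r" "r < p" "0 < A"
  shows "u powr r \<le> A * u powr p + A powr (-r/(p-r))"
proof (cases "u = 0")
  case True then show ?thesis using assms by simp
next
  case False
  then have u: "u > 0" using assms by simp
  show ?thesis
  proof (cases "A * u powr (p - r) \<ge> 1")
    case True
    have "u powr r \<le> A * u powr (p - r) * u powr r" using True u by simp
    also have "\<dots> = A * u powr p" using u by (simp add: powr_add[symmetric])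
    finally show ?thesis using assms by (smt (verit) powr_ge_zero)
  next
    case False
    then have "u powr (p - r) < 1 / A" using assms by (simp add: field_simps mult.commute)
    then have "(u powr (p - r)) powr (r/(p-r)) < (1/A) powr (r/(p-r))"
      using assms u by (intro powr_less_mono2) auto
    also have "(u powr (p - r)) powr (r/(p-r)) = u powr r" using assms by (simp add: powr_powr)
    also have "(1/A) powr (r/(p-r)) = A powr (-r/(p-r))" using assms
      by (simp add: powr_divide powr_minus_divide)
    finally show ?thesis using assms by (smt (verit) powr_ge_zero mult_nonneg_nonneg)
  qed
qed

lemma powr_le_sum1:
  fixes u p q :: real
  assumes "0 \<le> u" "0 < p" "p \<le> q"
  shows "u powr p \<le> u powr q + 1"
proof (cases "u \<le> 1")
  case True
  then have "u powr p \<le> 1" using powr_mono2[of p u 1] assms by simp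
  then show ?thesis by (smt (verit) powr_ge_zero)
next
  case False
  then have "u powr p \<le> u powr q" using assms by (intro powr_mono) auto
  then show ?thesis by simp
qed



definition hdec :: "'a::euclidean_space \<Rightarrow> real" where
  "hdec x = (\<Prod>b\<in>Basis. inverse (1 + (x \<bullet> b)^2))"

lemma hdec_pos: "0 < hdec x"
  unfolding hdec_def by (intro prod_pos) (auto simp: add_pos_nonneg)

lemma hdec_le1: "hdec x \<le> 1"
  unfolding hdec_def by (intro prod_le_1) (auto simp: add_pos_nonneg inverse_le_1_iff)

lemma hdec_inv_bound:
  fixes x :: "'a::euclidean_space"
  shows "inverse (hdec x) \<le> (exp 1 + norm x) powr (2 * real DIM('a))"
proof -
  have "inverse (hdec x) = (\<Prod>b\<in>Basis. (1 + (x \<bullet> b)^2))"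
    unfolding hdec_def by (simp add: prod_inversef[symmetric] o_def)
  also have "\<dots> \<le> (\<Prod>b\<in>(Basis::'a set). (exp 1 + norm x)^2)"
  proof (intro prod_mono conjI)
    fix b :: 'a assume b: "b \<in> Basis"
    show "0 \<le> 1 + (x \<bullet> b)^2" by simp
    have "\<bar>x \<bullet> b\<bar> \<le> norm x" using Basis_le_norm[OF b] by simp
    moreover have "1 \<le> exp (1::real)" by simp
    ultimately show "1 + (x \<bullet> b)^2 \<le> (exp 1 + norm x)^2"
    proof -
      have "\<bar>x \<bullet> b\<bar>^2 \<le> (norm x)^2" by (rule power_mono) (use \<open>\<bar>x \<bullet> b\<bar> \<le> norm x\<close> in auto)
      then have A: "(x \<bullet> b)^2 \<le> (norm x)^2" by simp
      have B: "(1::real) \<le> (exp 1)^2" using \<open>1 \<le> exp (1::real)\<close> by (simp add: one_le_power)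
      have C: "0 \<le> 2 * exp 1 * norm x" by simp
      show ?thesis unfolding power2_sum using A B C by linarith
    qed
  qed
  also have "\<dots> = (exp 1 + norm x) ^ (2 * DIM('a))"
    by (simp add: power_mult)
  also have "\<dots> = (exp 1 + norm x) powr (2 * real DIM('a))"
    by (subst powr_realpow[symmetric]) (auto simp: add_pos_nonneg)
  finally show ?thesis .
qed

lemma decay_pointwise:
  fixes x :: "'a::euclidean_space" and u m p P Ci :: real
  assumes u: "0 \<le> u" and m: "0 < m" "m \<le> p" and pP: "p \<le> P" and Ci: "0 \<le> Ci"
    and dec: "P - p \<le> Ci / ln (exp 1 + norm x)"
  shows "u powr p \<le> (1 + exp (2 * real DIM('a) * Ci / m)) * u powr P + hdec x"
proof -
  define K where "K = exp (2 * real DIM('a) * Ci / m)"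
  have K: "K > 0" unfolding K_def by simp
  have K1: "K \<ge> 1" unfolding K_def using Ci m by simp
  define L where "L = ln (exp 1 + norm x)"
  have L1: "L \<ge> 1" unfolding L_def
    by (subst ln_ge_iff) (auto simp: add_pos_nonneg)
  define h where "h = hdec x"
  have h: "0 < h" "h \<le> 1" unfolding h_def using hdec_pos hdec_le1 by auto
  have "u powr p \<le> K * u powr P + h"
  proof (cases "u \<ge> 1")
    case True
    then have "u powr p \<le> u powr P" using pP by (intro powr_mono) auto
    moreover have "u powr P \<le> K * u powr P" using K1 by (simp add: mult_le_cancel_right1)
    ultimately show ?thesis using h by simp
  next
    case False
    then have u1: "u < 1" by simp
    show ?thesis
    proof (cases "u < h powr (1/m)")
      case True
      have "u powr p \<le> u powr m" using u u1 m by (intro powr_mono') auto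
      also have "u powr m \<le> (h powr (1/m)) powr m" using True u m by (intro powr_mono2) auto
      also have "\<dots> = h" using m h by (simp add: powr_powr)
      finally show ?thesis using K by (smt (verit) powr_ge_zero mult_nonneg_nonneg)
    next
      case False
      then have uh: "h powr (1/m) \<le> u" by simp
      then have upos: "u > 0" using h by (smt (verit) powr_gt_zero)
      have eta: "P - p \<le> Ci / L" using dec L_def by simp
      have i1: "(1/u) powr (P - p) = u powr (p - P)" using upos
        by (simp add: powr_divide powr_minus_divide[symmetric])
      have "u powr p = u powr P * (1/u) powr (P - p)" unfolding i1
        by (simp add: powr_add[symmetric])
      also have "(1/u) powr (P - p) \<le> (1/u) powr (Ci / L)"
        using upos u1 eta by (intro powr_mono) (auto simp: field_simps)
      also have "\<dots> \<le> (h powr (-1/m)) powr (Ci / L)"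
      proof (rule powr_mono2)
        show "0 \<le> Ci / L" using Ci L1 by simp
        show "0 \<le> 1/u" using upos by simp
        have "1/u \<le> 1 / (h powr (1/m))" using uh h upos by (intro divide_left_mono) auto
        also have "\<dots> = h powr (-1/m)" by (simp add: powr_minus_divide)
        finally show "1/u \<le> h powr (-1/m)" .
      qed
      also have "\<dots> = (inverse h) powr (Ci / L / m)" using h m
        by (simp add: powr_powr powr_minus_divide powr_divide field_simps)
      also have "\<dots> \<le> ((exp 1 + norm x) powr (2 * real DIM('a))) powr (Ci / L / m)"
        using hdec_inv_bound[of x] h Ci L1 m unfolding h_def
        by (intro powr_mono2) auto
      also have "\<dots> = exp (L * (2 * real DIM('a) * (Ci / L / m)))"
        unfolding L_def using add_pos_nonneg[OF exp_gt_zero[of 1] norm_ge_zero[of x]]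
        by (simp add: powr_powr powr_def mult_ac)
      also have "\<dots> = K" unfolding K_def using L1 by (simp add: field_simps)
      finally have "u powr p \<le> u powr P * K" using upos by (simp add: mult_left_mono)
      then show ?thesis using h by (simp add: mult.commute)
    qed
  qed
  also have "\<dots> \<le> (1 + K) * u powr P + h" by (simp add: algebra_simps)
  finally show ?thesis unfolding K_def h_def .
qed



lemma hdec_nn_finite: "(\<integral>\<^sup>+ x. ennreal (hdec (x::'a::euclidean_space)) \<partial>lebesgue) < \<infinity>"
proof -
  have int1: "integrable lborel (\<lambda>t::real. inverse (1 + t^2))"
    using integrable_inverse_1_plus_square
    by (simp add: set_integrable_def einterval_def)
  then have fin1: "(\<integral>\<^sup>+ t. ennreal (inverse (1 + t^2)) \<partial>lborel) < \<infinity>"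
    by (auto dest!: integrableD(2) simp: add_pos_nonneg top.not_eq_extremum)
  have "(\<integral>\<^sup>+ x. ennreal (hdec (x::'a)) \<partial>lebesgue) = (\<integral>\<^sup>+ x. ennreal (hdec (x::'a)) \<partial>lborel)"
    by (simp add: nn_integral_completion)
  also have "\<dots> = (\<integral>\<^sup>+ x. (\<Prod>b\<in>Basis. ennreal (inverse (1 + ((x::'a) \<bullet> b)^2))) \<partial>lborel)"
    unfolding hdec_def by (subst prod_ennreal) (auto simp: add_pos_nonneg)
  also have "\<dots> = (\<Prod>b\<in>(Basis::'a set). (\<integral>\<^sup>+ t. ennreal (inverse (1 + t^2)) \<partial>lborel))"
    by (rule nn_integral_lborel_prod[where f="\<lambda>b t. inverse (1 + t^2)"]) (auto simp: add_pos_nonneg)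
  also have "\<dots> < \<infinity>" using fin1 by (simp del: prod_constant) (metis less_top power_eq_top_ennreal prod_constant)
  finally show ?thesis .
qed





lemma inner_One_Basis: "b \<in> Basis \<Longrightarrow> (One::'a::euclidean_space) \<bullet> b = 1"
  by (simp add: inner_sum_left inner_Basis)

lemma mem_cube: "x \<in> cube a l \<longleftrightarrow> (\<forall>b\<in>Basis. a \<bullet> b \<le> x \<bullet> b \<and> x \<bullet> b \<le> a \<bullet> b + l)"
  unfolding cube_def by (auto simp: mem_box inner_add_left inner_One_Basis)

lemma emeasure_cube: "0 \<le> l \<Longrightarrow> emeasure lebesgue (cube (a::'a::euclidean_space) l) = ennreal (l ^ DIM('a))"
proof -
  assume l: "0 \<le> l"
  have "emeasure lebesgue (cube a l) = emeasure lborel (cube a l)"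
    unfolding cube_def by (simp add: emeasure_completion)
  also have "\<dots> = ennreal (\<Prod>b\<in>(Basis::'a set). l)"
    unfolding cube_def using l by (subst emeasure_lborel_cbox) (auto simp: inner_add_left inner_One_Basis inner_diff_left)
  finally show ?thesis by simp
qed

lemma measure_cube: "0 \<le> l \<Longrightarrow> measure lebesgue (cube (a::'a::euclidean_space) l) = l ^ DIM('a)"
  using emeasure_cube[of l a] by (simp add: measure_def)

lemma cube_sets[measurable]: "cube a l \<in> sets lebesgue"
  unfolding cube_def by simp

lemma subcube:
  fixes x0 a :: "'a::euclidean_space"
  assumes l: "0 < l" and x0: "x0 \<in> cube a l" and d: "0 < d"
  shows "\<exists>c \<delta>. 0 < \<delta> \<and> cube c \<delta> \<subseteq> cube a l \<inter> ball x0 d"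
proof -
  define n where "n = real DIM('a)"
  have n: "n \<ge> 1" unfolding n_def by (simp add: DIM_positive Suc_leI)
  define \<delta> where "\<delta> = min (l/2) (d / (2*n))"
  have \<delta>: "0 < \<delta>" "\<delta> \<le> l/2" "\<delta> \<le> d/(2*n)" using l d n unfolding \<delta>_def by auto
  define g where "g i = (if x0 \<bullet> i \<le> a \<bullet> i + l/2 then x0 \<bullet> i else x0 \<bullet> i - \<delta>)" for i
  define c where "c = (\<Sum>i\<in>Basis. g i *\<^sub>R i)"
  have ci: "c \<bullet> i = (if x0 \<bullet> i \<le> a \<bullet> i + l/2 then x0 \<bullet> i else x0 \<bullet> i - \<delta>)" if "i \<in> Basis" for i
    unfolding c_def using that by (simp add: g_def)
  have "cube c \<delta> \<subseteq> cube a l \<inter> ball x0 d"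
  proof
    fix y assume y: "y \<in> cube c \<delta>"
    have yi: "c \<bullet> i \<le> y \<bullet> i \<and> y \<bullet> i \<le> c \<bullet> i + \<delta>" if "i \<in> Basis" for i
      using y that unfolding mem_cube by auto
    have x0i: "a \<bullet> i \<le> x0 \<bullet> i \<and> x0 \<bullet> i \<le> a \<bullet> i + l" if "i \<in> Basis" for i
      using x0 that unfolding mem_cube by auto
    have "y \<in> cube a l" unfolding mem_cube
    proof
      fix i :: 'a assume i: "i \<in> Basis"
      show "a \<bullet> i \<le> y \<bullet> i \<and> y \<bullet> i \<le> a \<bullet> i + l"
        using yi[OF i] x0i[OF i] ci[OF i] \<delta> by (auto split: if_splits)
    qed
    moreover have "dist x0 y < d"
    proof -
      have "dist x0 y = norm (y - x0)" by (simp add: dist_norm norm_minus_commute)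
      also have "\<dots> \<le> (\<Sum>i\<in>Basis. \<bar>(y - x0) \<bullet> i\<bar>)" by (rule norm_le_l1)
      also have "\<dots> \<le> (\<Sum>i\<in>(Basis::'a set). \<delta>)"
      proof (rule sum_mono)
        fix i :: 'a assume i: "i \<in> Basis"
        show "\<bar>(y - x0) \<bullet> i\<bar> \<le> \<delta>"
          using yi[OF i] ci[OF i] \<delta> by (auto simp: inner_diff_left split: if_splits)
      qed
      also have "\<dots> = n * \<delta>" unfolding n_def by simp
      also have "\<dots> \<le> n * (d / (2*n))" using \<delta> n by (intro mult_left_mono) auto
      also have "\<dots> < d" using n d by (simp add: field_simps)
      finally show ?thesis .
    qed
    ultimately show "y \<in> cube a l \<inter> ball x0 d" by simp
  qed
  then show ?thesis using \<delta> by blast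
qed

lemma cube_not_null:
  assumes "0 < l" shows "\<not> (AE x in lebesgue. x \<notin> cube (a::'a::euclidean_space) l)"
proof
  assume "AE x in lebesgue. x \<notin> cube a l"
  then have "cube a l \<in> null_sets lebesgue" by (subst AE_iff_null_sets) auto
  then have "emeasure lebesgue (cube a l) = 0" by auto
  then show False using emeasure_cube[of l a] assms by simp
qed

lemma not_AE_le:
  fixes f :: "'a::euclidean_space \<Rightarrow> real"
  assumes l: "0 < l" and cont: "continuous_on UNIV f" and x0: "x0 \<in> cube a l" and M: "M < f x0"
  shows "\<not> (AE x in lebesgue. x \<in> cube a l \<longrightarrow> f x \<le> M)"
proof
  assume AE: "AE x in lebesgue. x \<in> cube a l \<longrightarrow> f x \<le> M"
  have "isCont f x0" using cont by (simp add: continuous_on_eq_continuous_at)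
  then obtain d where d: "d > 0" "\<And>y. dist y x0 < d \<Longrightarrow> dist (f y) (f x0) < f x0 - M"
    using M unfolding continuous_at_eps_delta by (metis diff_gt_0_iff_gt)
  obtain c \<delta> where c: "0 < \<delta>" "cube c \<delta> \<subseteq> cube a l \<inter> ball x0 d"
    using subcube[OF l x0 d(1)] by blast
  have "AE x in lebesgue. x \<notin> cube c \<delta>"
    using AE
  proof eventually_elim
    case (elim x)
    show ?case
    proof
      assume x: "x \<in> cube c \<delta>"
      then have "x \<in> cube a l" "dist x x0 < d" using c by (auto simp: dist_commute)
      then have "f x \<le> M" "dist (f x) (f x0) < f x0 - M" using elim d by auto
      then show False by (simp add: dist_real_def)
    qed
  qed
  then show False using cube_not_null[OF c(1)] by blast
qed




lemma plog_cont:
  assumes "P_log p pinf"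
  shows "continuous_on UNIV p"
proof -
  obtain C where C: "C > 0" "\<And>x y. 0 < dist x y \<and> dist x y \<le> 1/2 \<Longrightarrow> \<bar>p x - p y\<bar> \<le> C / (- ln (dist x y))"
    using assms unfolding P_log_def by blast
  have "isCont p x" for x
    unfolding continuous_at_eps_delta
  proof (intro allI impI)
    fix e :: real assume e: "e > 0"
    define d where "d = min (1/2) (exp (-(C/e + 1)))"
    have d: "d > 0" "d \<le> 1/2" "d \<le> exp (-(C/e + 1))" unfolding d_def by auto
    have "\<forall>y. dist y x < d \<longrightarrow> dist (p y) (p x) < e"
    proof (intro allI impI)
      fix y assume y: "dist y x < d"
      show "dist (p y) (p x) < e"
      proof (cases "y = x")
        case True then show ?thesis using e by simp
      next
        case False
        then have t: "0 < dist y x" "dist y x \<le> 1/2" using y d by auto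
        have "ln (dist y x) < ln d" using t y d by (subst ln_less_cancel_iff) auto
        also have "ln d \<le> -(C/e + 1)" using d by (metis ln_exp ln_le_cancel_iff exp_gt_zero)
        finally have lt: "C / e < - ln (dist y x)" by simp
        have Ce: "0 < C / e" using C e by simp
        have pos: "0 < - ln (dist y x)" using lt Ce by linarith
        have "\<bar>p y - p x\<bar> \<le> C / (- ln (dist y x))" using C(2) t by blast
        also have "C / (- ln (dist y x)) < C / (C / e)" by (rule divide_strict_left_mono[OF lt C(1) mult_pos_pos[OF pos Ce]])
        also have "\<dots> = e" using C e by simp
        finally show ?thesis by (simp add: dist_real_def)
      qed
    qed
    then show "\<exists>d>0. \<forall>y. dist y x < d \<longrightarrow> dist (p y) (p x) < e" using d by blast
  qed
  then show ?thesis by (simp add: continuous_at_imp_continuous_on)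
qed

lemma ess_sup_ge:
  fixes p :: "'a::euclidean_space \<Rightarrow> real"
  assumes cont: "continuous_on UNIV p" and ex: "\<exists>M. AE x in lebesgue. p x \<le> M"
  shows "p x \<le> ess_sup_on UNIV p"
  unfolding ess_sup_on_def
proof (rule cInf_greatest)
  show "{M. AE x in lebesgue. x \<in> UNIV \<longrightarrow> p x \<le> M} \<noteq> {}" using ex by auto
  fix M assume "M \<in> {M. AE x in lebesgue. x \<in> UNIV \<longrightarrow> p x \<le> M}"
  then have AE: "AE y in lebesgue. y \<in> cube x 1 \<longrightarrow> p y \<le> M" by auto
  have "x \<in> cube x 1" unfolding mem_cube by auto
  then show "p x \<le> M" using not_AE_le[OF _ cont, of 1 x x M] AE by force
qed

lemma ess_inf_le:
  fixes p :: "'a::euclidean_space \<Rightarrow> real"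
  assumes cont: "continuous_on UNIV p" and ex: "\<forall>x. B \<le> p x"
  shows "ess_inf_on UNIV p \<le> p x"
  unfolding ess_inf_on_def
proof (rule cSup_least)
  show "{M. AE x in lebesgue. x \<in> UNIV \<longrightarrow> M \<le> p x} \<noteq> {}" using ex by auto
  fix M assume "M \<in> {M. AE x in lebesgue. x \<in> UNIV \<longrightarrow> M \<le> p x}"
  then have AE: "AE y in lebesgue. y \<in> cube x 1 \<longrightarrow> - p y \<le> - M" by auto
  have cont': "continuous_on UNIV (\<lambda>y. - p y)" using cont by (intro continuous_intros)
  have "x \<in> cube x 1" unfolding mem_cube by auto
  then show "M \<le> p x" using not_AE_le[OF _ cont', of 1 x x "-M"] AE by force
qed

lemma ess_sup_cube_ge:
  fixes p :: "'a::euclidean_space \<Rightarrow> real"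
  assumes cont: "continuous_on UNIV p" and B: "\<forall>x. p x \<le> B" and l: "0 < l" and x: "x \<in> cube a l"
  shows "p x \<le> ess_sup_on (cube a l) p"
  unfolding ess_sup_on_def
proof (rule cInf_greatest)
  show "{M. AE x in lebesgue. x \<in> cube a l \<longrightarrow> p x \<le> M} \<noteq> {}" using B by auto
  fix M assume "M \<in> {M. AE x in lebesgue. x \<in> cube a l \<longrightarrow> p x \<le> M}"
  then have AE: "AE y in lebesgue. y \<in> cube a l \<longrightarrow> p y \<le> M" by auto
  then show "p x \<le> M" using not_AE_le[OF l cont x, of M] by force
qed

lemma ess_sup_cube_le:
  fixes p :: "'a::euclidean_space \<Rightarrow> real"
  assumes cont: "continuous_on UNIV p" and B: "\<forall>x. p x \<le> B" and l: "0 < l"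
    and M: "\<forall>x\<in>cube a l. p x \<le> M"
  shows "ess_sup_on (cube a l) p \<le> M"
  unfolding ess_sup_on_def
proof (rule cInf_lower)
  show "M \<in> {M. AE x in lebesgue. x \<in> cube a l \<longrightarrow> p x \<le> M}" using M by auto
  have a: "a \<in> cube a l" using l unfolding mem_cube by auto
  show "bdd_below {M. AE x in lebesgue. x \<in> cube a l \<longrightarrow> p x \<le> M}"
    unfolding bdd_below_def
  proof (intro exI ballI)
    fix M' assume "M' \<in> {M. AE x in lebesgue. x \<in> cube a l \<longrightarrow> p x \<le> M}"
    then show "p a \<le> M'" using not_AE_le[OF l cont a, of M'] by force
  qed
qed




lemma var_norm_le:
  fixes G p :: "'a::euclidean_space \<Rightarrow> real"
  assumes Gm[measurable]: "G \<in> borel_measurable lebesgue" and pm[measurable]: "p \<in> borel_measurable lebesgue"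
    and m: "0 < m" and pm': "\<forall>x. m \<le> p x" and lam: "0 < lam" and A: "1 \<le> A"
    and rho: "(\<integral>\<^sup>+x. ennreal ((\<bar>G x\<bar> / lam) powr p x) \<partial>lebesgue) \<le> ennreal A"
  shows "var_norm p G \<le> A powr (1/m) * lam"
    and "(\<integral>\<^sup>+x. ennreal ((\<bar>G x\<bar> / (A powr (1/m) * lam)) powr p x) \<partial>lebesgue) \<le> 1"
proof -
  define k where "k = A powr (1/m)"
  have k1: "1 \<le> k" unfolding k_def using A m by (simp add: ge_one_powr_ge_zero)
  have kA: "k powr m = A" unfolding k_def using A m by (simp add: powr_powr)
  have pw: "(\<bar>G x\<bar> / (k * lam)) powr p x \<le> (1/A) * (\<bar>G x\<bar> / lam) powr p x" for x
  proof -
    have "(\<bar>G x\<bar> / (k * lam)) powr p x = (\<bar>G x\<bar> / lam) powr p x / k powr p x"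
      using k1 lam by (simp add: powr_divide divide_divide_eq_left powr_mult mult.commute)
    also have "\<dots> \<le> (\<bar>G x\<bar> / lam) powr p x / k powr m"
      using k1 pm' m by (intro divide_left_mono powr_mono mult_pos_pos) auto
    also have "\<dots> = (1/A) * (\<bar>G x\<bar> / lam) powr p x" using kA by simp
    finally show ?thesis .
  qed
  have "(\<integral>\<^sup>+x. ennreal ((\<bar>G x\<bar> / (k * lam)) powr p x) \<partial>lebesgue)
      \<le> (\<integral>\<^sup>+x. ennreal (1/A) * ennreal ((\<bar>G x\<bar> / lam) powr p x) \<partial>lebesgue)"
    using pw A by (intro nn_integral_mono) (simp add: ennreal_mult[symmetric])
  also have "\<dots> = ennreal (1/A) * (\<integral>\<^sup>+x. ennreal ((\<bar>G x\<bar> / lam) powr p x) \<partial>lebesgue)"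
    by (rule nn_integral_cmult) measurable
  also have "\<dots> \<le> ennreal (1/A) * ennreal A" by (intro mult_left_mono rho) auto
  also have "\<dots> = 1" using A by (simp add: ennreal_mult[symmetric])
  finally have in_set: "(\<integral>\<^sup>+x. ennreal ((\<bar>G x\<bar> / (k * lam)) powr p x) \<partial>lebesgue) \<le> 1" .
  then show "(\<integral>\<^sup>+x. ennreal ((\<bar>G x\<bar> / (A powr (1/m) * lam)) powr p x) \<partial>lebesgue) \<le> 1"
    unfolding k_def .
  show "var_norm p G \<le> A powr (1/m) * lam"
    unfolding var_norm_def k_def[symmetric]
    by (rule cInf_lower) (use in_set k1 lam in \<open>auto intro!: bdd_belowI[where m=0]\<close>)
qed

lemma var_norm_ge:
  fixes G p :: "'a::euclidean_space \<Rightarrow> real"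
  assumes ex: "\<exists>lam>0. (\<integral>\<^sup>+x. ennreal ((\<bar>G x\<bar> / lam) powr p x) \<partial>lebesgue) \<le> 1"
    and B: "\<And>lam. 0 < lam \<Longrightarrow> (\<integral>\<^sup>+x. ennreal ((\<bar>G x\<bar> / lam) powr p x) \<partial>lebesgue) \<le> 1 \<Longrightarrow> B \<le> lam"
  shows "B \<le> var_norm p G"
  unfolding var_norm_def by (rule cInf_greatest) (use ex B in auto)




locale setting =
  fixes p \<omega> :: "'a::euclidean_space \<Rightarrow> real" and s P m Ci Ch CR :: real
  assumes pm[measurable]: "p \<in> borel_measurable lebesgue"
    and m_pos: "0 < m" and p_lo: "\<And>x. m \<le> p x" and p_hi: "\<And>x. p x \<le> P"
    and s_pos: "0 < s" and s_m: "1/s < m"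
    and Ci: "0 < Ci" and decay: "\<And>x. \<bar>p x - P\<bar> \<le> Ci / ln (exp 1 + norm x)"
    and Ch: "0 < Ch" and holder: "\<And>x y. 0 < dist x y \<Longrightarrow> dist x y \<le> 1/2 \<Longrightarrow> \<bar>p x - p y\<bar> \<le> Ch / (- ln (dist x y))"
    and cont: "continuous_on UNIV p"
    and \<omega>pos: "AE x in lebesgue. 0 < \<omega> x"
    and \<omega>meas: "\<And>a l. (\<lambda>x. indicator (cube a l) x * \<omega> x) \<in> borel_measurable lebesgue"
    and CR: "0 < CR"
    and RHi: "\<And>a l. 0 < l \<Longrightarrow> set_integrable lebesgue (cube a l) (\<lambda>x. \<omega> x powr P)"
    and RH: "\<And>a l. 0 < l \<Longrightarrow> ((1 / measure lebesgue (cube a l)) * (\<integral>x\<in>cube a l. \<omega> x powr P \<partial>lebesgue)) powr (1/(s*P))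
        \<le> CR * ((1 / measure lebesgue (cube a l)) * (\<integral>x\<in>cube a l. \<omega> x powr (1/s) \<partial>lebesgue))"
begin

lemma mP: "m \<le> P" using p_lo p_hi by (meson order_trans)
lemma P_pos: "0 < P" using m_pos mP by linarith

definition NN :: "'a \<Rightarrow> real \<Rightarrow> real \<Rightarrow> ennreal" where
  "NN a l e = (\<integral>\<^sup>+x. ennreal (indicator (cube a l) x * \<bar>\<omega> x\<bar> powr e) \<partial>lebesgue)"

lemma absw_meas[measurable]: "(\<lambda>x. indicator (cube a l) x * \<bar>\<omega> x\<bar>) \<in> borel_measurable lebesgue"
proof -
  have "(\<lambda>x. \<bar>indicator (cube a l) x * \<omega> x\<bar>) \<in> borel_measurable lebesgue"
    using \<omega>meas[of a l] by measurable
  then show ?thesis by (simp add: abs_mult)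
qed

lemma indpow_eq: "indicator Q x * \<bar>y\<bar> powr e = (indicator Q x * \<bar>y\<bar>) powr (e::real)"
  by (simp add: indicator_def)

lemma indpow_meas[measurable]: "(\<lambda>x. indicator (cube a l) x * \<bar>\<omega> x\<bar> powr e) \<in> borel_measurable lebesgue"
  unfolding indpow_eq by measurable

lemma NN_P_fin: assumes "0 < l" shows "NN a l P < \<infinity>"
proof -
  have "integrable lebesgue (\<lambda>x. indicator (cube a l) x *\<^sub>R \<omega> x powr P)"
    using RHi[OF assms] by (simp add: set_integrable_def)
  then have fin: "(\<integral>\<^sup>+x. ennreal (norm (indicator (cube a l) x *\<^sub>R \<omega> x powr P)) \<partial>lebesgue) < \<infinity>"
    by (simp add: integrable_iff_bounded)
  have "NN a l P = (\<integral>\<^sup>+x. ennreal (norm (indicator (cube a l) x *\<^sub>R \<omega> x powr P)) \<partial>lebesgue)"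
    unfolding NN_def
  proof (rule nn_integral_cong_AE)
    show "AE x in lebesgue. ennreal (indicator (cube a l) x * \<bar>\<omega> x\<bar> powr P) =
        ennreal (norm (indicator (cube a l) x *\<^sub>R \<omega> x powr P))"
      using \<omega>pos by eventually_elim (simp add: indicator_def)
  qed
  then show ?thesis using fin by simp
qed

lemma NN_fin: assumes l: "0 < l" and e: "0 < e" "e \<le> P" shows "NN a l e < \<infinity>"
proof -
  have "NN a l e \<le> (\<integral>\<^sup>+x. ennreal (indicator (cube a l) x * \<bar>\<omega> x\<bar> powr P) + ennreal (indicator (cube a l) x) \<partial>lebesgue)"
    unfolding NN_def
  proof (intro nn_integral_mono)
    fix x
    have "indicator (cube a l) x * \<bar>\<omega> x\<bar> powr e \<le> indicator (cube a l) x * \<bar>\<omega> x\<bar> powr P + indicator (cube a l) x"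
      using powr_le_sum1[of "\<bar>\<omega> x\<bar>" e P] e by (simp add: indicator_def)
    then show "ennreal (indicator (cube a l) x * \<bar>\<omega> x\<bar> powr e) \<le> ennreal (indicator (cube a l) x * \<bar>\<omega> x\<bar> powr P) + ennreal (indicator (cube a l) x)"
      by (simp add: ennreal_plus[symmetric] del: ennreal_plus)
  qed
  also have "\<dots> = NN a l P + emeasure lebesgue (cube a l)"
    unfolding NN_def by (subst nn_integral_add) (auto simp: ennreal_indicator)
  also have "\<dots> < \<infinity>" using NN_P_fin[OF l] emeasure_cube[of l a] l by (simp add: less_top[symmetric])
  finally show ?thesis .
qed

lemma set_int_eq: "(\<integral>x\<in>cube a l. \<omega> x powr e \<partial>lebesgue) = enn2real (NN a l e)"
  unfolding NN_def set_lebesgue_integral_def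
proof (rule enn2real_nn_integral_eq_integral[symmetric])
  show "AE x in lebesgue. ennreal (indicator (cube a l) x * \<bar>\<omega> x\<bar> powr e) = ennreal (indicator (cube a l) x *\<^sub>R \<omega> x powr e)"
    using \<omega>pos by eventually_elim (simp add: indicator_def)
  show "AE x in lebesgue. 0 \<le> indicator (cube a l) x *\<^sub>R \<omega> x powr e" by simp
  have "(\<lambda>x. (indicator (cube a l) x * \<omega> x) powr e) \<in> borel_measurable lebesgue"
    using \<omega>meas[of a l] by measurable
  moreover have "(\<lambda>x. (indicator (cube a l) x * \<omega> x) powr e) = (\<lambda>x. indicator (cube a l) x *\<^sub>R \<omega> x powr e)"
    by (auto simp: indicator_def fun_eq_iff)
  ultimately show "(\<lambda>x. indicator (cube a l) x *\<^sub>R \<omega> x powr e) \<in> borel_measurable lebesgue" by simp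
qed

lemma NN_eq: assumes "0 < l" "0 < e" "e \<le> P"
  shows "NN a l e = ennreal (\<integral>x\<in>cube a l. \<omega> x powr e \<partial>lebesgue)"
  using NN_fin[OF assms] unfolding set_int_eq by (simp add: less_top)

lemma NN_pos: assumes l: "0 < l" shows "0 < NN a l e"
proof (rule ccontr)
  assume "\<not> 0 < NN a l e"
  then have "NN a l e = 0" by (simp add: not_gr_zero)
  then have "AE x in lebesgue. ennreal (indicator (cube a l) x * \<bar>\<omega> x\<bar> powr e) = 0"
    unfolding NN_def by (subst (asm) nn_integral_0_iff_AE) auto
  then have "AE x in lebesgue. x \<notin> cube a l"
    using \<omega>pos by eventually_elim (auto simp: indicator_def)
  then show False using cube_not_null[OF l] by blast
qed

lemma set_int_pos: assumes "0 < l" "0 < e" "e \<le> P"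
  shows "0 < (\<integral>x\<in>cube a l. \<omega> x powr e \<partial>lebesgue)"
  using NN_pos[OF assms(1), of a e] NN_eq[OF assms, of a] by simp

end




context setting begin

definition rho :: "'a \<Rightarrow> real \<Rightarrow> real \<Rightarrow> ennreal" where
  "rho a l lam = (\<integral>\<^sup>+x. ennreal ((\<bar>indicator (cube a l) x * \<omega> x\<bar> / lam) powr p x) \<partial>lebesgue)"

lemma upper_gen:
  assumes l: "0 < l" and q: "0 < q" "q \<le> P" and K: "0 \<le> K"
    and pw: "\<And>x u. x \<in> cube a l \<Longrightarrow> 0 \<le> u \<Longrightarrow> u powr p x \<le> K * u powr q + H x"
    and H: "\<And>x. 0 \<le> H x" and Hm[measurable]: "H \<in> borel_measurable lebesgue"
    and Hb: "(\<integral>\<^sup>+x. ennreal (H x) \<partial>lebesgue) \<le> ennreal Hb" and Hb0: "0 \<le> Hb"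
  shows "rho a l ((\<integral>x\<in>cube a l. \<omega> x powr q \<partial>lebesgue) powr (1/q)) \<le> ennreal (K + Hb)"
proof -
  define I where "I = (\<integral>x\<in>cube a l. \<omega> x powr q \<partial>lebesgue)"
  define R where "R = I powr (1/q)"
  have I: "0 < I" unfolding I_def using set_int_pos[OF l q] .
  have R: "0 < R" unfolding R_def using I by simp
  have RI: "R powr q = I" unfolding R_def using I q by (simp add: powr_powr)
  have pw2: "(\<bar>indicator (cube a l) x * \<omega> x\<bar> / R) powr p x \<le> (K / R powr q) * (indicator (cube a l) x * \<bar>\<omega> x\<bar> powr q) + H x" for x
  proof (cases "x \<in> cube a l")
    case True
    have "(\<bar>\<omega> x\<bar> / R) powr p x \<le> K * (\<bar>\<omega> x\<bar> / R) powr q + H x" using pw[OF True] R by simp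
    also have "K * (\<bar>\<omega> x\<bar> / R) powr q = (K / R powr q) * \<bar>\<omega> x\<bar> powr q" using R by (simp add: powr_divide)
    finally show ?thesis using True by simp
  next
    case False then show ?thesis using H[of x] by simp
  qed
  have "rho a l R \<le> (\<integral>\<^sup>+x. ennreal (K / R powr q) * ennreal (indicator (cube a l) x * \<bar>\<omega> x\<bar> powr q) + ennreal (H x) \<partial>lebesgue)"
    unfolding rho_def
  proof (rule nn_integral_mono)
    fix x
    show "ennreal ((\<bar>indicator (cube a l) x * \<omega> x\<bar> / R) powr p x) \<le> ennreal (K / R powr q) * ennreal (indicator (cube a l) x * \<bar>\<omega> x\<bar> powr q) + ennreal (H x)"
      using pw2[of x] K R H[of x] by (simp add: ennreal_mult[symmetric] ennreal_plus[symmetric] del: ennreal_plus)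
  qed
  also have "\<dots> = ennreal (K / R powr q) * NN a l q + (\<integral>\<^sup>+x. ennreal (H x) \<partial>lebesgue)"
    unfolding NN_def by (subst nn_integral_add) (auto simp: nn_integral_cmult)
  also have "\<dots> \<le> ennreal (K / R powr q) * ennreal I + ennreal Hb"
    using NN_eq[OF l q, of a] Hb unfolding I_def by (intro add_mono) auto
  also have "\<dots> = ennreal (K + Hb)"
    using RI R I K
    apply (subst ennreal_mult[symmetric]) apply simp apply simp
    using Hb0 by (simp add: ennreal_plus[symmetric] del: ennreal_plus)
  finally show ?thesis unfolding R_def I_def .
qed

lemma G_meas[measurable]: "(\<lambda>x. indicator (cube a l) x * \<omega> x) \<in> borel_measurable lebesgue"
  by (rule \<omega>meas)

lemma upper_norm:
  assumes l: "0 < l" and q: "0 < q" "q \<le> P" and K: "0 \<le> K"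
    and pw: "\<And>x u. x \<in> cube a l \<Longrightarrow> 0 \<le> u \<Longrightarrow> u powr p x \<le> K * u powr q + H x"
    and H: "\<And>x. 0 \<le> H x" and Hm[measurable]: "H \<in> borel_measurable lebesgue"
    and Hb: "(\<integral>\<^sup>+x. ennreal (H x) \<partial>lebesgue) \<le> ennreal Hb" and Hb0: "0 \<le> Hb"
  shows "var_norm p (\<lambda>x. indicator (cube a l) x * \<omega> x) \<le> (K + Hb + 2) powr (1/m) * (\<integral>x\<in>cube a l. \<omega> x powr q \<partial>lebesgue) powr (1/q)"
    and "\<exists>lam>0. rho a l lam \<le> 1"
proof -
  define R where "R = (\<integral>x\<in>cube a l. \<omega> x powr q \<partial>lebesgue) powr (1/q)"
  have R: "0 < R" unfolding R_def using set_int_pos[OF l q, of a] by simp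
  have "rho a l R \<le> ennreal (K + Hb)" unfolding R_def by (rule upper_gen[OF l q K pw H Hm Hb Hb0])
  also have "\<dots> \<le> ennreal (K + Hb + 2)" by (intro ennreal_leI) simp
  finally have rhoR: "rho a l R \<le> ennreal (K + Hb + 2)" .
  note vn = var_norm_le[OF G_meas pm m_pos _ R, of "K + Hb + 2"]
  show "var_norm p (\<lambda>x. indicator (cube a l) x * \<omega> x) \<le> (K + Hb + 2) powr (1/m) * R"
    using vn(1) rhoR p_lo K Hb0 unfolding rho_def by auto
  have "rho a l ((K + Hb + 2) powr (1/m) * R) \<le> 1"
    using vn(2) rhoR p_lo K Hb0 unfolding rho_def by auto
  moreover have "0 < (K + Hb + 2) powr (1/m) * R" using R K Hb0 by simp
  ultimately show "\<exists>lam>0. rho a l lam \<le> 1" by blast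
qed

end




context setting begin

lemma r_facts: "0 < 1/s" "1/s < m" "1/s \<le> P" using s_pos s_m mP by auto

lemma lower_Nr:
  assumes l: "0 < l" and q: "m \<le> q" "q \<le> P"
    and B0: "1 \<le> B0" and Vb: "\<And>x. x \<in> cube a l \<Longrightarrow> (l ^ DIM('a)) powr ((p x - q)/q) \<le> B0"
    and lam: "0 < lam" and rho1: "rho a l lam \<le> 1"
  shows "(\<integral>x\<in>cube a l. \<omega> x powr (1/s) \<partial>lebesgue) \<le> lam powr (1/s) * (l ^ DIM('a)) powr (1 - (1/s)/q) * (B0 + 1)"
proof -
  define r where "r = 1/s"
  define V where "V = (l ^ DIM('a)::real)"
  have r: "0 < r" "r < m" "r \<le> P" unfolding r_def using r_facts by auto
  have V: "0 < V" unfolding V_def using l by simp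
  have qpos: "0 < q" using q m_pos by linarith
  define c1 where "c1 = lam powr r * B0 * V powr (1 - r/q)"
  define c2 where "c2 = lam powr r * V powr (- r/q)"
  have c1: "0 \<le> c1" unfolding c1_def using B0 by simp
  have c2: "0 \<le> c2" unfolding c2_def by simp
  have pw: "indicator (cube a l) x * \<bar>\<omega> x\<bar> powr r \<le> c1 * (\<bar>indicator (cube a l) x * \<omega> x\<bar> / lam) powr p x + c2 * indicator (cube a l) x" for x
  proof (cases "x \<in> cube a l")
    case True
    define u where "u = \<bar>\<omega> x\<bar> / lam"
    define A where "A = V powr ((p x - r)/q)"
    have u: "0 \<le> u" unfolding u_def using lam by simp
    have A: "0 < A" unfolding A_def using V by simp
    have pr: "r < p x" using r p_lo[of x] by linarith
    have y: "u powr r \<le> A * u powr p x + A powr (-r/(p x - r))" by (rule young_var[OF u r(1) pr A])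
    have ex: "(p x - r)/q * (-r/(p x - r)) = -r/q" using pr qpos by (simp add: field_simps)
    have A1: "A powr (-r/(p x - r)) = V powr (-r/q)" unfolding A_def
      by (simp only: powr_powr ex)
    have ex2: "(p x - r)/q = (1 - r/q) + (p x - q)/q" using qpos by (simp add: field_simps)
    have "A = V powr (1 - r/q) * V powr ((p x - q)/q)" by (simp only: A_def ex2 powr_add)
    also have "\<dots> \<le> V powr (1 - r/q) * B0" using Vb[OF True] unfolding V_def by (intro mult_left_mono) auto
    finally have A2: "A \<le> V powr (1 - r/q) * B0" .
    have "u powr r \<le> V powr (1 - r/q) * B0 * u powr p x + V powr (-r/q)"
    proof -
      have "A * u powr p x \<le> V powr (1 - r/q) * B0 * u powr p x" using A2 by (intro mult_right_mono) auto
      then show ?thesis using y A1 by linarith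
    qed
    then have "lam powr r * u powr r \<le> lam powr r * (V powr (1 - r/q) * B0 * u powr p x + V powr (-r/q))"
      by (intro mult_left_mono) auto
    moreover have "lam powr r * u powr r = \<bar>\<omega> x\<bar> powr r" unfolding u_def using lam by (simp add: powr_divide)
    ultimately have "\<bar>\<omega> x\<bar> powr r \<le> c1 * u powr p x + c2" unfolding c1_def c2_def by (simp add: algebra_simps)
    then show ?thesis using True unfolding u_def by simp
  next
    case False then show ?thesis by simp
  qed
  have "NN a l r \<le> (\<integral>\<^sup>+x. ennreal c1 * ennreal ((\<bar>indicator (cube a l) x * \<omega> x\<bar> / lam) powr p x) + ennreal c2 * ennreal (indicator (cube a l) x) \<partial>lebesgue)"
    unfolding NN_def
  proof (rule nn_integral_mono)
    fix x show "ennreal (indicator (cube a l) x * \<bar>\<omega> x\<bar> powr r) \<le> ennreal c1 * ennreal ((\<bar>indicator (cube a l) x * \<omega> x\<bar> / lam) powr p x) + ennreal c2 * ennreal (indicator (cube a l) x)"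
      using pw[of x] c1 c2 by (simp add: ennreal_mult[symmetric] ennreal_plus[symmetric] del: ennreal_plus)
  qed
  also have "\<dots> = ennreal c1 * rho a l lam + ennreal c2 * emeasure lebesgue (cube a l)"
    unfolding rho_def by (subst nn_integral_add) (auto simp: nn_integral_cmult ennreal_indicator)
  also have "\<dots> \<le> ennreal c1 * 1 + ennreal c2 * ennreal V"
    using rho1 emeasure_cube[of l a] l unfolding V_def by (intro add_mono mult_left_mono) auto
  also have "\<dots> = ennreal (c1 + c2 * V)" using c1 c2 V by (simp add: ennreal_mult[symmetric] ennreal_plus[symmetric] del: ennreal_plus)
  finally have NNr: "NN a l r \<le> ennreal (c1 + c2 * V)" .
  have VV: "V powr (-r/q) * V = V powr (1 - r/q)"
  proof -
    have "V powr (-r/q) * V = V powr (-r/q) * V powr 1" using V by simp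
    also have "\<dots> = V powr (-r/q + 1)" by (simp only: powr_add)
    finally show ?thesis by simp
  qed
  have "c2 * V = lam powr r * V powr (1 - r/q)" unfolding c2_def using VV by (simp only: mult.assoc)
  then have eq: "c1 + c2 * V = lam powr r * V powr (1 - r/q) * (B0 + 1)" unfolding c1_def by (simp add: algebra_simps)
  have "(\<integral>x\<in>cube a l. \<omega> x powr r \<partial>lebesgue) = enn2real (NN a l r)" by (rule set_int_eq)
  also have "\<dots> \<le> enn2real (ennreal (c1 + c2 * V))" using NNr by (intro enn2real_mono) auto
  also have "\<dots> = c1 + c2 * V" using c1 c2 V by (simp del: ennreal_plus)
  finally show ?thesis using eq unfolding r_def V_def by simp
qed

end




context setting begin

lemma jensen_lite:
  assumes l: "0 < l" and q: "0 < q" "q \<le> P"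
  shows "(\<integral>x\<in>cube a l. \<omega> x powr q \<partial>lebesgue) \<le> 2 * (l ^ DIM('a)) * ((1 / (l ^ DIM('a))) * (\<integral>x\<in>cube a l. \<omega> x powr P \<partial>lebesgue)) powr (q/P)"
proof -
  define V where "V = (l ^ DIM('a)::real)"
  define IP where "IP = (\<integral>x\<in>cube a l. \<omega> x powr P \<partial>lebesgue)"
  define X where "X = (1/V) * IP"
  define Y where "Y = X powr (q/P)"
  have V: "0 < V" unfolding V_def using l by simp
  have IP: "0 < IP" unfolding IP_def using set_int_pos[OF l P_pos order_refl] .
  have X: "0 < X" unfolding X_def using V IP by simp
  have Y: "0 < Y" unfolding Y_def using X by simp
  have qP: "0 < q/P" "q/P \<le> 1" using q P_pos by auto
  have pw: "indicator (cube a l) x * \<bar>\<omega> x\<bar> powr q \<le> Y * indicator (cube a l) x + (Y / X) * (indicator (cube a l) x * \<bar>\<omega> x\<bar> powr P)" for x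
  proof (cases "x \<in> cube a l")
    case True
    define u where "u = \<bar>\<omega> x\<bar> powr P / X"
    have u: "0 \<le> u" unfolding u_def using X by simp
    have "u powr (q/P) \<le> u powr 1 + 1" by (rule powr_le_sum1[OF u qP(1) qP(2)])
    also have "u powr 1 = u" using u by (cases "u = 0") auto
    finally have uu: "u powr (q/P) \<le> u + 1" .
    have "u powr (q/P) = \<bar>\<omega> x\<bar> powr q / Y" unfolding u_def Y_def using X P_pos
      by (simp add: powr_divide powr_powr)
    then have "\<bar>\<omega> x\<bar> powr q / Y \<le> u + 1" using uu by simp
    then have "\<bar>\<omega> x\<bar> powr q \<le> Y * (u + 1)" using Y by (simp add: divide_le_eq mult.commute)
    also have "\<dots> = Y + (Y / X) * \<bar>\<omega> x\<bar> powr P" unfolding u_def by (simp add: algebra_simps)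
    finally show ?thesis using True by simp
  next
    case False then show ?thesis by simp
  qed
  have "NN a l q \<le> (\<integral>\<^sup>+x. ennreal Y * ennreal (indicator (cube a l) x) + ennreal (Y / X) * ennreal (indicator (cube a l) x * \<bar>\<omega> x\<bar> powr P) \<partial>lebesgue)"
    unfolding NN_def
  proof (rule nn_integral_mono)
    fix x show "ennreal (indicator (cube a l) x * \<bar>\<omega> x\<bar> powr q) \<le> ennreal Y * ennreal (indicator (cube a l) x) + ennreal (Y / X) * ennreal (indicator (cube a l) x * \<bar>\<omega> x\<bar> powr P)"
      using pw[of x] X Y by (simp add: ennreal_mult[symmetric] ennreal_plus[symmetric] del: ennreal_plus)
  qed
  also have "\<dots> = ennreal Y * emeasure lebesgue (cube a l) + ennreal (Y / X) * NN a l P"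
    unfolding NN_def by (subst nn_integral_add) (auto simp: nn_integral_cmult ennreal_indicator)
  also have "\<dots> = ennreal Y * ennreal V + ennreal (Y / X) * ennreal IP"
    using emeasure_cube[of l a] l NN_eq[OF l P_pos order_refl, of a] unfolding V_def IP_def by simp
  also have "\<dots> = ennreal (Y * V + (Y / X) * IP)" using X Y V IP
    by (simp add: ennreal_mult[symmetric] ennreal_plus[symmetric] del: ennreal_plus)
  also have "Y * V + (Y / X) * IP = 2 * V * Y" unfolding X_def using V IP by (simp add: field_simps)
  finally have NNq: "NN a l q \<le> ennreal (2 * V * Y)" .
  have "(\<integral>x\<in>cube a l. \<omega> x powr q \<partial>lebesgue) = enn2real (NN a l q)" by (rule set_int_eq)
  also have "\<dots> \<le> enn2real (ennreal (2 * V * Y))" using NNq by (intro enn2real_mono) auto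
  also have "\<dots> = 2 * V * Y" using V Y by simp
  finally show ?thesis unfolding Y_def X_def V_def IP_def .
qed

lemma lower_R:
  assumes l: "0 < l" and q: "m \<le> q" "q \<le> P"
    and B0: "1 \<le> B0" and Vb: "\<And>x. x \<in> cube a l \<Longrightarrow> (l ^ DIM('a)) powr ((p x - q)/q) \<le> B0"
    and lam: "0 < lam" and rho1: "rho a l lam \<le> 1"
  shows "(\<integral>x\<in>cube a l. \<omega> x powr q \<partial>lebesgue) powr (1/q) \<le> 2 powr (1/m) * (CR * (B0 + 1)) powr s * lam"
proof -
  define r where "r = 1/s"
  define V where "V = (l ^ DIM('a)::real)"
  define IP where "IP = (\<integral>x\<in>cube a l. \<omega> x powr P \<partial>lebesgue)"
  define Ir where "Ir = (\<integral>x\<in>cube a l. \<omega> x powr r \<partial>lebesgue)"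
  define Iq where "Iq = (\<integral>x\<in>cube a l. \<omega> x powr q \<partial>lebesgue)"
  define X where "X = (1/V) * IP"
  define K where "K = CR * (B0 + 1)"
  have qpos: "0 < q" using q m_pos by linarith
  have V: "0 < V" unfolding V_def using l by simp
  have IP: "0 < IP" unfolding IP_def using set_int_pos[OF l P_pos order_refl] .
  have Iq: "0 < Iq" unfolding Iq_def using set_int_pos[OF l qpos q(2)] .
  have X: "0 < X" unfolding X_def using V IP by simp
  have K: "0 < K" unfolding K_def using CR B0 by simp
  have r: "0 < r" unfolding r_def using s_pos by simp
  have mV: "measure lebesgue (cube a l) = V" unfolding V_def using measure_cube[of l a] l by simp
  have rh: "X powr (1/(s * P)) \<le> CR * ((1/V) * Ir)"
    using RH[OF l, of a] unfolding mV X_def IP_def Ir_def r_def .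
  have Ir: "Ir \<le> lam powr r * V powr (1 - r/q) * (B0 + 1)"
    using lower_Nr[OF l q B0 Vb lam rho1] unfolding Ir_def r_def V_def by simp
  have VV: "(1/V) * V powr (1 - r/q) = V powr (-r/q)"
  proof -
    have "V powr (1 - r/q) = V powr 1 * V powr (-r/q)" by (simp only: powr_add[symmetric]) simp
    then show ?thesis using V by simp
  qed
  have "(1/V) * Ir \<le> (1/V) * (lam powr r * V powr (1 - r/q) * (B0 + 1))"
    using Ir V by (intro mult_left_mono) auto
  also have "\<dots> = lam powr r * V powr (-r/q) * (B0 + 1)"
  proof -
    have VV': "V powr (1 - r/q) = V * V powr (-r/q)" using VV V by (simp add: field_simps)
    show ?thesis unfolding VV' using V by simp
  qed
  finally have "X powr (1/(s * P)) \<le> K * lam powr r * V powr (-r/q)"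
    using rh CR unfolding K_def by (smt (verit, ccfv_SIG) mult.assoc mult.commute mult_left_mono)
  then have "(X powr (1/(s * P))) powr (q * s) \<le> (K * lam powr r * V powr (-r/q)) powr (q * s)"
    using qpos s_pos by (intro powr_mono2) auto
  moreover have "(X powr (1/(s * P))) powr (q * s) = X powr (q/P)"
    using s_pos P_pos by (simp add: powr_powr)
  moreover have "(K * lam powr r * V powr (-r/q)) powr (q * s) = K powr (q * s) * lam powr q * V powr (-1)"
    using K lam V qpos s_pos unfolding r_def by (simp add: powr_mult powr_powr)
  ultimately have Xb: "X powr (q/P) \<le> K powr (q * s) * lam powr q * V powr (-1)" by simp
  have "Iq \<le> 2 * V * X powr (q/P)"
    using jensen_lite[OF l qpos q(2), of a] unfolding Iq_def X_def V_def IP_def .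
  also have "\<dots> \<le> 2 * V * (K powr (q * s) * lam powr q * V powr (-1))"
    using Xb V by (intro mult_left_mono) auto
  also have "\<dots> = 2 * K powr (q * s) * lam powr q" using V by (simp add: powr_minus field_simps)
  finally have Iqb: "Iq \<le> 2 * K powr (q * s) * lam powr q" .
  have "Iq powr (1/q) \<le> (2 * K powr (q * s) * lam powr q) powr (1/q)"
    using Iqb Iq qpos by (intro powr_mono2) auto
  also have "\<dots> = 2 powr (1/q) * K powr s * lam"
    using K lam qpos by (simp add: powr_mult powr_powr)
  also have "\<dots> \<le> 2 powr (1/m) * K powr s * lam"
    using q m_pos qpos K lam by (intro mult_right_mono powr_mono) (auto simp: frac_le)
  finally show ?thesis unfolding Iq_def K_def .
qed

end




context setting begin

definition Dconst :: real where
  "Dconst = Ch * (1 + ln (real DIM('a)) / ln 2) + (P - m) * ln (2 * real DIM('a))"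

lemma dist_cube: assumes "x \<in> cube (a::'a) l" "y \<in> cube a l" shows "dist x y \<le> real DIM('a) * l"
proof -
  have "dist x y = norm (x - y)" by (simp add: dist_norm)
  also have "\<dots> \<le> (\<Sum>i\<in>Basis. \<bar>(x - y) \<bullet> i\<bar>)" by (rule norm_le_l1)
  also have "\<dots> \<le> (\<Sum>i\<in>(Basis::'a set). l)"
  proof (rule sum_mono)
    fix i :: 'a assume i: "i \<in> Basis"
    have "a \<bullet> i \<le> x \<bullet> i" "x \<bullet> i \<le> a \<bullet> i + l" "a \<bullet> i \<le> y \<bullet> i" "y \<bullet> i \<le> a \<bullet> i + l"
      using assms i unfolding mem_cube by auto
    then show "\<bar>(x - y) \<bullet> i\<bar> \<le> l" by (simp add: inner_diff_left abs_le_iff)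
  qed
  also have "\<dots> = real DIM('a) * l" by simp
  finally show ?thesis .
qed

lemma holder_cube:
  assumes l: "0 < l" "l \<le> 1"
  shows "\<exists>\<delta>\<ge>0. \<delta> * ln (1/l) \<le> Dconst \<and> (\<forall>x\<in>cube a l. \<forall>y\<in>cube a l. p y \<le> p x + \<delta>)"
proof -
  define n where "n = real DIM('a)"
  have n: "1 \<le> n" unfolding n_def by (simp add: DIM_positive Suc_leI)
  have lnl: "0 \<le> ln (1/l)" using l by simp
  have D1: "0 \<le> Ch * (1 + ln n / ln 2)" using Ch n by simp
  have D2: "0 \<le> (P - m) * ln (2 * n)" using mP n by simp
  show ?thesis
  proof (cases "n * l \<le> 1/2")
    case True
    define \<delta> where "\<delta> = Ch / (- ln (n * l))"
    have nl: "0 < n * l" using n l by simp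
    have lnnl: "ln 2 \<le> - ln (n * l)"
    proof -
      have "ln (n * l) \<le> ln (1/2)" using True nl by simp
      then show ?thesis by (simp add: ln_div)
    qed
    have ln2: "0 < ln (2::real)" by simp
    have negpos: "0 < - ln (n * l)" using lnnl ln2 by linarith
    have \<delta>0: "0 \<le> \<delta>" unfolding \<delta>_def by (rule divide_nonneg_pos) (use Ch negpos in auto)
    have t: "ln (1/l) = - ln (n * l) + ln n" using n l by (simp add: ln_mult ln_div)
    have "\<delta> * ln (1/l) = Ch * (1 + ln n / (- ln (n * l)))" unfolding \<delta>_def t using negpos
      by (simp add: field_simps)
    also have "\<dots> \<le> Ch * (1 + ln n / ln 2)"
    proof -
      have "ln n / (- ln (n * l)) \<le> ln n / ln 2"
        using n lnnl ln2 negpos by (intro divide_left_mono mult_pos_pos) auto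
      then show ?thesis using Ch by (intro mult_left_mono) auto
    qed
    finally have b: "\<delta> * ln (1/l) \<le> Dconst" unfolding Dconst_def n_def[symmetric] using D2 by linarith
    have "p y \<le> p x + \<delta>" if x: "x \<in> cube a l" and y: "y \<in> cube a l" for x y
    proof (cases "dist x y = 0")
      case True then show ?thesis using \<delta>0 by simp
    next
      case False
      then have d0: "0 < dist x y" by simp
      have dle: "dist x y \<le> n * l" using dist_cube[OF x y] unfolding n_def .
      then have "dist x y \<le> 1/2" using True by linarith
      then have "\<bar>p x - p y\<bar> \<le> Ch / (- ln (dist x y))" using holder d0 by blast
      also have "\<dots> \<le> Ch / (- ln (n * l))"
      proof -
        have "ln (dist x y) \<le> ln (n * l)" using dle d0 nl by (subst ln_le_cancel_iff) auto
        then show ?thesis using Ch negpos by (intro divide_left_mono mult_pos_pos) auto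
      qed
      finally show ?thesis unfolding \<delta>_def by linarith
    qed
    then show ?thesis using \<delta>0 b by blast
  next
    case False
    define \<delta> where "\<delta> = P - m"
    have \<delta>0: "0 \<le> \<delta>" unfolding \<delta>_def using mP by simp
    have "ln (1/l) \<le> ln (2 * n)" using False l n by (simp add: field_simps)
    then have "\<delta> * ln (1/l) \<le> \<delta> * ln (2 * n)" using \<delta>0 by (intro mult_left_mono)
    then have b: "\<delta> * ln (1/l) \<le> Dconst" unfolding Dconst_def n_def[symmetric] \<delta>_def using D1 by linarith
    have "p y \<le> p x + \<delta>" for x y using p_hi[of y] p_lo[of x] unfolding \<delta>_def by linarith
    then show ?thesis using \<delta>0 b by blast
  qed
qed

end




lemma hdec_meas[measurable]: "(hdec :: 'a::euclidean_space \<Rightarrow> real) \<in> borel_measurable lebesgue"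
proof -
  have [measurable]: "(\<lambda>x::'a. x) \<in> borel_measurable lebesgue"
    using id_borel_measurable_lebesgue by (simp add: id_def)
  show ?thesis unfolding hdec_def by measurable
qed

context setting begin

definition "Kd = 1 + exp (2 * real DIM('a) * Ci / m)"
definition "Hb = enn2real (\<integral>\<^sup>+ x. ennreal (hdec (x::'a)) \<partial>lebesgue)"
definition "Cup = (Kd + Hb + 2) powr (1/m)"
definition "B0 = exp (real DIM('a) * Dconst / m)"
definition "clow = 1 / (2 powr (1/m) * (CR * (B0 + 1)) powr s)"

lemma Kd2: "2 \<le> Kd" unfolding Kd_def using Ci m_pos by simp
lemma Hb0: "0 \<le> Hb" unfolding Hb_def by simp
lemma Hb_bound: "(\<integral>\<^sup>+ x. ennreal (hdec (x::'a)) \<partial>lebesgue) \<le> ennreal Hb"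
proof -
  have fin: "(\<integral>\<^sup>+ x. ennreal (hdec (x::'a)) \<partial>lebesgue) < top" using hdec_nn_finite by simp
  show ?thesis unfolding Hb_def ennreal_enn2real[OF fin] by (rule order_refl)
qed
lemma Dconst0: "0 \<le> Dconst"
proof -
  have n: "1 \<le> real DIM('a)" by (simp add: DIM_positive Suc_leI)
  have a1: "0 \<le> ln (2 * real DIM('a))" by (rule ln_ge_zero) (use n in linarith)
  have a2: "0 \<le> ln (real DIM('a))" by (rule ln_ge_zero) (use n in linarith)
  show ?thesis unfolding Dconst_def using Ch mP a1 a2 by (auto intro!: add_nonneg_nonneg mult_nonneg_nonneg)
qed
lemma B01: "1 \<le> B0" unfolding B0_def using Dconst0 m_pos by simp
lemma Cup_pos: "0 < Cup" unfolding Cup_def using Kd2 Hb0 by simp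
lemma clow_pos: "0 < clow" unfolding clow_def using CR B01 by simp

lemma lower_from:
  assumes l: "0 < l" and q: "m \<le> q" "q \<le> P"
    and Vb: "\<And>x. x \<in> cube a l \<Longrightarrow> (l ^ DIM('a)) powr ((p x - q)/q) \<le> B0"
    and ex: "\<exists>lam>0. rho a l lam \<le> 1"
  shows "clow * (\<integral>x\<in>cube a l. \<omega> x powr q \<partial>lebesgue) powr (1/q) \<le> var_norm p (\<lambda>x. indicator (cube a l) x * \<omega> x)"
proof (rule var_norm_ge)
  show "\<exists>lam>0. (\<integral>\<^sup>+x. ennreal ((\<bar>indicator (cube a l) x * \<omega> x\<bar> / lam) powr p x) \<partial>lebesgue) \<le> 1"
    using ex unfolding rho_def .
  fix lam :: real assume lam: "0 < lam"
    and r1: "(\<integral>\<^sup>+x. ennreal ((\<bar>indicator (cube a l) x * \<omega> x\<bar> / lam) powr p x) \<partial>lebesgue) \<le> 1"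
  have prev: "(\<integral>x\<in>cube a l. \<omega> x powr q \<partial>lebesgue) powr (1/q) \<le> 2 powr (1/m) * (CR * (B0 + 1)) powr s * lam"
  proof (rule lower_R[OF l q B01 Vb lam])
    show "rho a l lam \<le> 1" using r1 unfolding rho_def .
  qed
  have Kp: "0 < 2 powr (1/m) * (CR * (B0 + 1)) powr s" using CR B01 by simp
  have e: "clow * (\<integral>x\<in>cube a l. \<omega> x powr q \<partial>lebesgue) powr (1/q) = (\<integral>x\<in>cube a l. \<omega> x powr q \<partial>lebesgue) powr (1/q) / (2 powr (1/m) * (CR * (B0 + 1)) powr s)"
    unfolding clow_def by simp
  have "(\<integral>x\<in>cube a l. \<omega> x powr q \<partial>lebesgue) powr (1/q) \<le> lam * (2 powr (1/m) * (CR * (B0 + 1)) powr s)"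
    using prev by (simp add: mult_ac)
  then show "clow * (\<integral>x\<in>cube a l. \<omega> x powr q \<partial>lebesgue) powr (1/q) \<le> lam"
    unfolding e using pos_divide_le_eq[OF Kp] by blast
qed

lemma cube_large:
  assumes l: "1 < l"
  shows "clow * (\<integral>x\<in>cube a l. \<omega> x powr P \<partial>lebesgue) powr (1/P) \<le> var_norm p (\<lambda>x. indicator (cube a l) x * \<omega> x)
    \<and> var_norm p (\<lambda>x. indicator (cube a l) x * \<omega> x) \<le> Cup * (\<integral>x\<in>cube a l. \<omega> x powr P \<partial>lebesgue) powr (1/P)"
proof -
  have l0: "0 < l" using l by simp
  have pw: "u powr p x \<le> Kd * u powr P + hdec x" if "x \<in> cube a l" "0 \<le> u" for x u
  proof -
    have "P - p x \<le> Ci / ln (exp 1 + norm x)" using decay[of x] by linarith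
    then show ?thesis unfolding Kd_def using decay_pointwise[where x=x and Ci=Ci, OF that(2) m_pos p_lo[of x] p_hi[of x]] Ci by simp
  qed
  note up = upper_norm[OF l0 P_pos order_refl _ pw _ hdec_meas Hb_bound Hb0]
  have K0: "0 \<le> Kd" using Kd2 by simp
  have up1: "var_norm p (\<lambda>x. indicator (cube a l) x * \<omega> x) \<le> Cup * (\<integral>x\<in>cube a l. \<omega> x powr P \<partial>lebesgue) powr (1/P)"
    using up(1)[OF K0] hdec_pos less_imp_le unfolding Cup_def by blast
  have ex: "\<exists>lam>0. rho a l lam \<le> 1" using up(2)[OF K0] hdec_pos less_imp_le by blast
  have V1: "1 \<le> (l ^ DIM('a))" using l by simp
  have Vb: "(l ^ DIM('a)) powr ((p x - P)/P) \<le> B0" if "x \<in> cube a l" for x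
  proof -
    have "(l ^ DIM('a)) powr ((p x - P)/P) \<le> (l ^ DIM('a)) powr 0"
      using V1 p_hi[of x] P_pos by (intro powr_mono) (auto simp: divide_nonpos_pos)
    then show ?thesis using B01 V1 l0 by simp
  qed
  show ?thesis using lower_from[OF l0 mP order_refl Vb ex] up1 by simp
qed

lemma cube_small:
  fixes a :: 'a
  assumes l: "0 < l" "l \<le> 1"
  defines "q \<equiv> ess_sup_on (cube a l) p"
  shows "clow * (\<integral>x\<in>cube a l. \<omega> x powr q \<partial>lebesgue) powr (1/q) \<le> var_norm p (\<lambda>x. indicator (cube a l) x * \<omega> x)
    \<and> var_norm p (\<lambda>x. indicator (cube a l) x * \<omega> x) \<le> Cup * (\<integral>x\<in>cube a l. \<omega> x powr q \<partial>lebesgue) powr (1/q)"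
proof -
  have bP: "\<forall>x. p x \<le> P" using p_hi by blast
  have pq: "p x \<le> q" if "x \<in> cube a l" for x
    unfolding q_def by (rule ess_sup_cube_ge[OF cont bP l(1) that])
  have qP: "q \<le> P" unfolding q_def by (rule ess_sup_cube_le[OF cont bP l(1)]) (use p_hi in auto)
  have aQ: "a \<in> cube a l" using l unfolding mem_cube by auto
  have mq: "m \<le> q" using p_lo[of a] pq[OF aQ] by linarith
  have qpos: "0 < q" using mq m_pos by linarith
  have pw: "u powr p x \<le> 1 * u powr q + indicator (cube a l) x" if "x \<in> cube a l" "0 \<le> u" for x u
    using powr_le_sum1[OF that(2) _ pq[OF that(1)]] p_lo[of x] m_pos that(1) by simp
  have Hb: "(\<integral>\<^sup>+x. ennreal (indicator (cube a l) x) \<partial>lebesgue) \<le> ennreal 1"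
  proof -
    have "(\<integral>\<^sup>+x. ennreal (indicator (cube a l) x) \<partial>lebesgue) = ennreal (l ^ DIM('a))"
      using emeasure_cube[of l a] l by (simp add: ennreal_indicator)
    also have "\<dots> \<le> ennreal 1" using l by (intro ennreal_leI) (simp add: power_le_one)
    finally show ?thesis .
  qed
  note up = upper_norm[OF l(1) qpos qP _ pw _ _ Hb]
  have up1: "var_norm p (\<lambda>x. indicator (cube a l) x * \<omega> x) \<le> (1 + 1 + 2) powr (1/m) * (\<integral>x\<in>cube a l. \<omega> x powr q \<partial>lebesgue) powr (1/q)"
    using up(1) by simp
  have ex: "\<exists>lam>0. rho a l lam \<le> 1" using up(2) by simp
  have "(1 + 1 + 2) powr (1/m) \<le> Cup" unfolding Cup_def using Kd2 Hb0 m_pos by (intro powr_mono2) auto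
  then have up2: "var_norm p (\<lambda>x. indicator (cube a l) x * \<omega> x) \<le> Cup * (\<integral>x\<in>cube a l. \<omega> x powr q \<partial>lebesgue) powr (1/q)"
    using up1 by (smt (verit) mult_right_mono powr_ge_zero)
  obtain \<delta> where \<delta>: "0 \<le> \<delta>" "\<delta> * ln (1/l) \<le> Dconst" "\<And>x y. x \<in> cube a l \<Longrightarrow> y \<in> cube a l \<Longrightarrow> p y \<le> p x + \<delta>"
    using holder_cube[OF l, of a] by blast
  have Vb: "(l ^ DIM('a)) powr ((p x - q)/q) \<le> B0" if x: "x \<in> cube a l" for x
  proof -
    define n where "n = real DIM('a)"
    have n: "1 \<le> n" unfolding n_def by (simp add: DIM_positive Suc_leI)
    have qx: "q \<le> p x + \<delta>" unfolding q_def by (rule ess_sup_cube_le[OF cont bP l(1)]) (use \<delta>(3)[OF x] in auto)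
    have lnl: "0 \<le> ln (1/l)" using l by simp
    have lnV: "ln (l ^ DIM('a)) = - n * ln (1/l)" unfolding n_def using l by (simp add: ln_realpow ln_div)
    have mm: "- ((p x - q)/q) = (q - p x)/q" by (simp add: minus_divide_left)
    have "(p x - q)/q * ln (l ^ DIM('a)) = (- ((p x - q)/q)) * (n * ln (1/l))" unfolding lnV by simp
    also have "\<dots> = ((q - p x)/q) * (n * ln (1/l))" unfolding mm ..
    also have "\<dots> \<le> (\<delta>/m) * (n * ln (1/l))"
    proof (rule mult_right_mono)
      show "0 \<le> n * ln (1/l)" using n lnl by simp
      have "(q - p x)/q \<le> \<delta>/q" using qx qpos by (intro divide_right_mono) auto
      also have "\<dots> \<le> \<delta>/m" using \<delta>(1) mq m_pos by (intro divide_left_mono) auto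
      finally show "(q - p x)/q \<le> \<delta>/m" .
    qed
    also have "\<dots> = n * (\<delta> * ln (1/l)) / m" by simp
    also have "\<dots> \<le> n * Dconst / m" using \<delta>(2) n m_pos by (intro divide_right_mono mult_left_mono) auto
    finally have e: "(p x - q)/q * ln (l ^ DIM('a)) \<le> n * Dconst / m" .
    have "(l ^ DIM('a)) powr ((p x - q)/q) = exp ((p x - q)/q * ln (l ^ DIM('a)))"
      using l by (simp add: powr_def)
    also have "\<dots> \<le> exp (n * Dconst / m)" using e by simp
    finally show ?thesis unfolding B0_def n_def .
  qed
  show ?thesis using lower_from[OF l(1) mq qP Vb ex] up2 by simp
qed

lemma main_locale:
  "\<exists>c>0. \<exists>C>0. \<forall>a l. 0 < l \<longrightarrow>
    (let Q = cube a l;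
         N = var_norm p (\<lambda>x. indicator Q x * \<omega> x);
         R = (if l > 1
              then (\<integral>x\<in>Q. \<omega> x powr P \<partial>lebesgue) powr (1 / P)
              else (\<integral>x\<in>Q. \<omega> x powr ess_sup_on Q p \<partial>lebesgue) powr (1 / ess_sup_on Q p))
     in c * R \<le> N \<and> N \<le> C * R)"
proof -
  have H: "(let Q = cube a l;
         N = var_norm p (\<lambda>x. indicator Q x * \<omega> x);
         R = (if l > 1
              then (\<integral>x\<in>Q. \<omega> x powr P \<partial>lebesgue) powr (1 / P)
              else (\<integral>x\<in>Q. \<omega> x powr ess_sup_on Q p \<partial>lebesgue) powr (1 / ess_sup_on Q p))
     in clow * R \<le> N \<and> N \<le> Cup * R)" if l: "0 < l" for a l
  proof (cases "1 < l")
    case True then show ?thesis using cube_large[OF True, of a] by (simp add: Let_def)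
  next
    case False then show ?thesis using cube_small[OF l, of a] by (simp add: Let_def)
  qed
  show ?thesis using clow_pos Cup_pos H by blast
qed

end


theorem corollary3p9:
  fixes p \<omega> :: "real^'n \<Rightarrow> real" and s :: real
  assumes "P_log p (ess_sup_on UNIV p)"
    and "s > 1 / ess_inf_on UNIV p"
    and "weight \<omega>"
    and "RH (s * ess_sup_on UNIV p) (\<lambda>x. \<omega> x powr (1/s))"
  shows "\<exists>c>0. \<exists>C>0. \<forall>(a::real^'n) l. 0 < l \<longrightarrow>
    (let Q = cube a l;
         N = weighted_var_norm p \<omega> (indicator Q);
         R = (if l > 1
              then (\<integral>x\<in>Q. \<omega> x powr ess_sup_on UNIV p \<partial>lebesgue) powr (1 / ess_sup_on UNIV p)
              else (\<integral>x\<in>Q. \<omega> x powr ess_sup_on Q p \<partial>lebesgue) powr (1 / ess_sup_on Q p))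
     in c * R \<le> N \<and> N \<le> C * R)"
proof -
  define P where "P = ess_sup_on UNIV p"
  define m where "m = ess_inf_on UNIV p"
  note PL = assms(1)[unfolded P_log_def, folded P_def m_def]
  have pm: "p \<in> borel_measurable lebesgue" using PL by blast
  have exM: "\<exists>M. AE x in lebesgue. p x \<le> M" using PL by blast
  have m_pos: "0 < m" using PL by blast
  obtain Ch where Ch: "0 < Ch" "\<And>x y. 0 < dist x y \<and> dist x y \<le> 1/2 \<Longrightarrow> \<bar>p x - p y\<bar> \<le> Ch / (- ln (dist x y))"
    using PL by blast
  obtain Ci where Ci: "0 < Ci" "\<And>x. \<bar>p x - P\<bar> \<le> Ci / ln (exp 1 + norm x)"
    using PL by blast
  have cont: "continuous_on UNIV p" by (rule plog_cont[OF assms(1)])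
  have p_hi: "p x \<le> P" for x unfolding P_def by (rule ess_sup_ge[OF cont exM])
  have lowb: "\<forall>x. P - Ci \<le> p x"
  proof
    fix x :: "real^'n"
    have L1: "1 \<le> ln (exp 1 + norm x)" by (subst ln_ge_iff) (auto simp: add_pos_nonneg)
    have "Ci / ln (exp 1 + norm x) \<le> Ci / 1" using Ci(1) L1 by (intro divide_left_mono) auto
    then show "P - Ci \<le> p x" using Ci(2)[of x] by linarith
  qed
  have p_lo: "m \<le> p x" for x unfolding m_def by (rule ess_inf_le[OF cont lowb])
  have s_pos: "0 < s" using assms(2) m_pos unfolding m_def[symmetric] by (smt (verit) divide_pos_pos)
  have s_m: "1/s < m" using assms(2) m_pos s_pos unfolding m_def[symmetric] by (simp add: field_simps)
  have w: "(\<forall>K. compact K \<longrightarrow> set_integrable lebesgue K \<omega>)" "AE x in lebesgue. 0 < \<omega> x"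
    using assms(3) unfolding weight_def by auto
  have wmeas: "(\<lambda>x. indicator (cube a l) x * \<omega> x) \<in> borel_measurable lebesgue" for a l
  proof -
    have "compact (cube a l)" unfolding cube_def by simp
    then have "set_integrable lebesgue (cube a l) \<omega>" using w(1) by blast
    then show ?thesis unfolding set_integrable_def by (simp add: borel_measurable_integrable)
  qed
  obtain CR where CR: "0 < CR" and RH0: "\<And>a l. 0 < l \<Longrightarrow>
      set_integrable lebesgue (cube a l) (\<lambda>x. (\<omega> x powr (1/s)) powr (s * P)) \<and>
      ((1 / measure lebesgue (cube a l)) * (\<integral>x\<in>cube a l. (\<omega> x powr (1/s)) powr (s * P) \<partial>lebesgue)) powr (1/(s * P))
        \<le> CR * ((1 / measure lebesgue (cube a l)) * (\<integral>x\<in>cube a l. \<omega> x powr (1/s) \<partial>lebesgue))"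
    using assms(4) unfolding RH_def P_def by blast
  have pp: "(\<omega> x powr (1/s)) powr (s * P) = \<omega> x powr P" for x using s_pos by (simp add: powr_powr)
  have RHi: "set_integrable lebesgue (cube a l) (\<lambda>x. \<omega> x powr P)" if "0 < l" for a l
    using RH0[OF that, of a] unfolding pp by blast
  have RH: "((1 / measure lebesgue (cube a l)) * (\<integral>x\<in>cube a l. \<omega> x powr P \<partial>lebesgue)) powr (1/(s * P))
        \<le> CR * ((1 / measure lebesgue (cube a l)) * (\<integral>x\<in>cube a l. \<omega> x powr (1/s) \<partial>lebesgue))" if "0 < l" for a l
    using RH0[OF that, of a] unfolding pp by blast
  interpret S: setting p \<omega> s P m Ci Ch CR
    using pm m_pos p_lo p_hi s_pos s_m Ci Ch cont w(2) wmeas CR RHi RH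
    by unfold_locales auto
  show ?thesis using S.main_locale unfolding weighted_var_norm_def P_def[symmetric] by simp
qed

end
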